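(* Let indices range over $\{1,\dots,5\}$. Let real numbers $\alpha^{ab}_i$ be given for all pairwise distinct $a,b,i$. Let nonnegative numbers $k^a_{ij}=k^a_{ji}$ be given for pairwise distinct $a,i,j$, and numbers $j_{ai}=j_{ia}$ for $a\ne i$, such that $$\sum_{j\notin\{a,i\}}k^a_{ij}=2j_{ai}.$$ Define $$\alpha^{ai}_{jk}=\alpha^{ai}_j-\alpha^{ai}_k,\qquad \xi^{ab}_i=\alpha^{ab}_i+\alpha^{ba}_i,\qquad \xi^{ij}=\frac13\sum_{k\notin\{i,j\}}\xi^{ij}_k,\qquad \alpha^a_{ij}=\frac16\sum_{b\notin\{i,j,a\}}\big(\alpha^{ai}_{jb}+\alpha^{aj}_{ib}\big),$$ and let $$I=\frac12\sum_{a}\sum_{\substack{i<j\\ i,j\ne a}}k^a_{ij}\big(\alpha^{aj}_i+\alpha^{ai}_j\big)$$ be the imaginary part of the on-shell action. Then $I$ equals the twisted-geometry generalization of the Regge action: $$I=S_{\mathbb T}:=\sum_{i<j}j_{ij}\,\xi^{ij}+\sum_a\sum_{\substack{i<j\\ i,j\ne a}}k^a_{ij}\,\alpha^a_{ij}.$$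
   Context: Geometric interpretation (not needed for the identity): $a=1,\dots,5$ label the tetrahedra of a 4-simplex, and face $(ai)$ of tetrahedron $a$ is glued to face $(ia)$ of tetrahedron $i$. The number $2j_{ai}$ is the area of that shared triangle. The integers $k^a_{ij}$ label the discrete intertwiner at tetrahedron $a$. The angle $\alpha^{ab}_i$ is the angle, in face $b$ of tetrahedron $a$, between the edge $(bi)$ and a reference frame vector. The on-shell value of the action governing the large-spin asymptotics of the 4-simplex amplitude has imaginary part $I$. *)

theory Defs
  imports Complex_Main
begin

text \<open>Indices range over {1..5}. alpha a b i stands for alpha^{ab}_i,
  k a i j for k^a_{ij}, jj a i for j_{ai}.\<close>

definition Idx :: "nat set" where "Idx = {1..5}"

definition alpha2 :: "(nat \<Rightarrow> nat \<Rightarrow> nat \<Rightarrow> real) \<Rightarrow> nat \<Rightarrow> nat \<Rightarrow> nat \<Rightarrow> nat \<Rightarrow> real" where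
  "alpha2 \<alpha> a i j k = \<alpha> a i j - \<alpha> a i k"

definition xi3 :: "(nat \<Rightarrow> nat \<Rightarrow> nat \<Rightarrow> real) \<Rightarrow> nat \<Rightarrow> nat \<Rightarrow> nat \<Rightarrow> real" where
  "xi3 \<alpha> a b i = \<alpha> a b i + \<alpha> b a i"

definition xi2 :: "(nat \<Rightarrow> nat \<Rightarrow> nat \<Rightarrow> real) \<Rightarrow> nat \<Rightarrow> nat \<Rightarrow> real" where
  "xi2 \<alpha> i j = (1/3) * (\<Sum>k\<in>Idx - {i, j}. xi3 \<alpha> i j k)"

definition alphaA :: "(nat \<Rightarrow> nat \<Rightarrow> nat \<Rightarrow> real) \<Rightarrow> nat \<Rightarrow> nat \<Rightarrow> nat \<Rightarrow> real" where
  "alphaA \<alpha> a i j = (1/6) * (\<Sum>b\<in>Idx - {i, j, a}. alpha2 \<alpha> a i j b + alpha2 \<alpha> a j i b)"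

definition ImAction :: "(nat \<Rightarrow> nat \<Rightarrow> nat \<Rightarrow> real) \<Rightarrow> (nat \<Rightarrow> nat \<Rightarrow> nat \<Rightarrow> real) \<Rightarrow> real" where
  "ImAction \<alpha> k = (1/2) * (\<Sum>a\<in>Idx. \<Sum>(i,j)\<in>{(i,j). i \<in> Idx \<and> j \<in> Idx \<and> i < j \<and> i \<noteq> a \<and> j \<noteq> a}.
      k a i j * (\<alpha> a j i + \<alpha> a i j))"

definition ReggeTwisted :: "(nat \<Rightarrow> nat \<Rightarrow> nat \<Rightarrow> real) \<Rightarrow> (nat \<Rightarrow> nat \<Rightarrow> nat \<Rightarrow> real) \<Rightarrow> (nat \<Rightarrow> nat \<Rightarrow> real) \<Rightarrow> real" where
  "ReggeTwisted \<alpha> k jj =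
     (\<Sum>(i,j)\<in>{(i,j). i \<in> Idx \<and> j \<in> Idx \<and> i < j}. jj i j * xi2 \<alpha> i j)
   + (\<Sum>a\<in>Idx. \<Sum>(i,j)\<in>{(i,j). i \<in> Idx \<and> j \<in> Idx \<and> i < j \<and> i \<noteq> a \<and> j \<noteq> a}.
        k a i j * alphaA \<alpha> a i j)"

end

theory Submission
  imports Defs
begin

lemma pair_sum:
  assumes "finite A"
  shows "(\<Sum>(i,j)\<in>{(i,j). i \<in> A \<and> j \<in> A \<and> Q i j}. f i j) = (\<Sum>i\<in>A. \<Sum>j\<in>A. if Q i j then f i j else 0)"
proof -
  have "{(i,j). i \<in> A \<and> j \<in> A \<and> Q i j} = Set.filter (\<lambda>(i,j). Q i j) (A \<times> A)" by auto
  hence "(\<Sum>(i,j)\<in>{(i,j). i \<in> A \<and> j \<in> A \<and> Q i j}. f i j) = (\<Sum>(i,j)\<in>A \<times> A. if Q i j then f i j else 0)"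
    using assms by (simp add: sum.inter_filter[symmetric] case_prod_beta if_distrib)
  also have "\<dots> = (\<Sum>i\<in>A. \<Sum>j\<in>A. if Q i j then f i j else 0)"
    by (simp add: sum.cartesian_product)
  finally show ?thesis .
qed

lemma diff_sum: "finite A \<Longrightarrow> sum f (A - B) = (\<Sum>x\<in>A. if x \<in> B then 0 else f x)"
  by (simp add: sum.If_cases Diff_eq)

lemma Idx_eq: "Idx = {1,2,3,4,5}" by (auto simp: Idx_def)

theorem mainTheorem14:
  fixes \<alpha> :: "nat \<Rightarrow> nat \<Rightarrow> nat \<Rightarrow> real"
    and k :: "nat \<Rightarrow> nat \<Rightarrow> nat \<Rightarrow> real"
    and jj :: "nat \<Rightarrow> nat \<Rightarrow> real"
  assumes k_sym: "\<And>a i j. a \<in> Idx \<Longrightarrow> i \<in> Idx \<Longrightarrow> j \<in> Idx \<Longrightarrow> a \<noteq> i \<Longrightarrow> a \<noteq> j \<Longrightarrow> i \<noteq> j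
                     \<Longrightarrow> k a i j = k a j i"
    and k_nonneg: "\<And>a i j. a \<in> Idx \<Longrightarrow> i \<in> Idx \<Longrightarrow> j \<in> Idx \<Longrightarrow> a \<noteq> i \<Longrightarrow> a \<noteq> j \<Longrightarrow> i \<noteq> j
                     \<Longrightarrow> 0 \<le> k a i j"
    and j_sym: "\<And>a i. a \<in> Idx \<Longrightarrow> i \<in> Idx \<Longrightarrow> a \<noteq> i \<Longrightarrow> jj a i = jj i a"
    and closure: "\<And>a i. a \<in> Idx \<Longrightarrow> i \<in> Idx \<Longrightarrow> a \<noteq> i
                     \<Longrightarrow> (\<Sum>j\<in>Idx - {a, i}. k a i j) = 2 * jj a i"
  shows "ImAction \<alpha> k = ReggeTwisted \<alpha> k jj"
  proof -
  have ks: "k 1 3 2 = k 1 2 3" "k 1 4 2 = k 1 2 4" "k 1 5 2 = k 1 2 5" "k 1 4 3 = k 1 3 4" "k 1 5 3 = k 1 3 5" "k 1 5 4 = k 1 4 5" "k 2 3 1 = k 2 1 3" "k 2 4 1 = k 2 1 4" "k 2 5 1 = k 2 1 5" "k 2 4 3 = k 2 3 4" "k 2 5 3 = k 2 3 5" "k 2 5 4 = k 2 4 5" "k 3 2 1 = k 3 1 2" "k 3 4 1 = k 3 1 4" "k 3 5 1 = k 3 1 5" "k 3 4 2 = k 3 2 4" "k 3 5 2 = k 3 2 5" "k 3 5 4 = k 3 4 5" "k 4 2 1 = k 4 1 2" "k 4 3 1 = k 4 1 3" "k 4 5 1 = k 4 1 5" "k 4 3 2 = k 4 2 3" "k 4 5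 2 = k 4 2 5" "k 4 5 3 = k 4 3 5" "k 5 2 1 = k 5 1 2" "k 5 3 1 = k 5 1 3" "k 5 4 1 = k 5 1 4" "k 5 3 2 = k 5 2 3" "k 5 4 2 = k 5 2 4" "k 5 4 3 = k 5 3 4" "k (Suc 0) 3 2 = k (Suc 0) 2 3" "k (Suc 0) 4 2 = k (Suc 0) 2 4" "k (Suc 0) 5 2 = k (Suc 0) 2 5" "k (Suc 0) 4 3 = k (Suc 0) 3 4" "k (Suc 0) 5 3 = k (Suc 0) 3 5" "k (Suc 0) 5 4 = k (Suc 0) 4 5" "k 2 3 (Suc 0) = k 2 (Suc 0) 3" "k 2 4 (Suc 0) = k 2 (Suc 0) 4" "k 2 5 (Suc 0) = k 2 (Suc 0) 5" "k 3 2 (Suc 0) = k 3 (Suc 0) 2" "k 3 4 (Suc 0) = k 3 (Suc 0) 4" "k 3 5 (Suc 0) = k 3 (Suc 0) 5" "k 4 2 (Suc 0) = k 4 (Suc 0) 2" "k 4 3 (Suc 0) = k 4 (Suc 0) 3" "k 4 5 (Suc 0) = k 4 (Suc 0) 5" "k 5 2 (Suc 0) = k 5 (Suc 0) 2" "k 5 3 (Suc 0) = k 5 (Suc 0) 3" "k 5 4 (Suc 0) = k 5 (Suc 0) 4"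
    using k_sym by (simp_all add: Idx_def)
  have js: "jj 2 1 = jj 1 2" "jj 3 1 = jj 1 3" "jj 4 1 = jj 1 4" "jj 5 1 = jj 1 5" "jj 3 2 = jj 2 3" "jj 4 2 = jj 2 4" "jj 5 2 = jj 2 5" "jj 4 3 = jj 3 4" "jj 5 3 = jj 3 5" "jj 5 4 = jj 4 5" "jj 2 (Suc 0) = jj (Suc 0) 2" "jj 3 (Suc 0) = jj (Suc 0) 3" "jj 4 (Suc 0) = jj (Suc 0) 4" "jj 5 (Suc 0) = jj (Suc 0) 5"
    using j_sym by (simp_all add: Idx_def)
  have fin: "finite Idx" by (simp add: Idx_def)
  have e: "ReggeTwisted \<alpha> k jj - ImAction \<alpha> k = (1/6)*(\<Sum>a\<in>Idx. \<Sum>i\<in>Idx-{a}. (2*jj a i - (\<Sum>j\<in>Idx-{a,i}. k a i j)) * (\<Sum>b\<in>Idx-{a,i}. \<alpha> a i b))"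
    unfolding ReggeTwisted_def ImAction_def xi2_def alphaA_def alpha2_def xi3_def
    apply (simp only: pair_sum[OF fin] diff_sum[OF fin])
    apply (simp add: Idx_eq ks js)
    apply (simp add: algebra_simps)
    done
  have z: "(\<Sum>a\<in>Idx. \<Sum>i\<in>Idx-{a}. (2*jj a i - (\<Sum>j\<in>Idx-{a,i}. k a i j)) * (\<Sum>b\<in>Idx-{a,i}. \<alpha> a i b)) = 0"
    by (intro sum.neutral ballI) (simp add: closure)
  show ?thesis using e z by simp
qed

end
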